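(* Let $q$ be a prime power. For any given integers $r>0$ and $\delta>0$ there exist a constant $c_{q,\delta,r}$ and an integer $n_0$ such that for every $n>n_0$, $\mathcal{C}_q(n,n-\delta,r)=c_{q,\delta,r}$.
   Context: For integers $n\ge k\ge r\ge 0$, a $q$-covering design $\mathcal{C}_q(n,k,r)$ is a collection $\mathbb{S}$ of $k$-dimensional subspaces of $\mathbb{F}_q^n$ such that every $r$-dimensional subspace of $\mathbb{F}_q^n$ is contained in at least one element of $\mathbb{S}$. $\mathcal{C}_q(n,k,r)$ denotes the minimum number of subspaces in such a design. *)

theory Defs
  imports Main "HOL.Vector_Spaces" "HOL-Library.Function_Algebras"
begin

text \<open>The ambient space F_q^n is modelled as the functions nat => 'a that vanish
outside {0..<n}; 'a is a finite field, so q = CARD('a).\<close>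

definition vscale :: "'a::field \<Rightarrow> (nat \<Rightarrow> 'a) \<Rightarrow> (nat \<Rightarrow> 'a)" where
  "vscale c v = (\<lambda>i. c * v i)"

definition ambient :: "nat \<Rightarrow> (nat \<Rightarrow> 'a::field) set" where
  "ambient n = {v. \<forall>i\<ge>n. v i = 0}"

definition subspaces_dim :: "nat \<Rightarrow> nat \<Rightarrow> (nat \<Rightarrow> 'a::field) set set" where
  "subspaces_dim n k = {S. S \<subseteq> ambient n \<and> module.subspace vscale S \<and> vector_space.dim vscale S = k}"

definition is_q_covering :: "nat \<Rightarrow> nat \<Rightarrow> nat \<Rightarrow> (nat \<Rightarrow> 'a::field) set set \<Rightarrow> bool" where
  "is_q_covering n k r C \<longleftrightarrow> C \<subseteq> subspaces_dim n k \<and>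
     (\<forall>R \<in> subspaces_dim n r. \<exists>S \<in> C. R \<subseteq> S)"

text \<open>Minimum size of a q-covering design over the field 'a (the type is fixed by the
itself argument).\<close>
definition covering_number :: "'a::{field,finite} itself \<Rightarrow> nat \<Rightarrow> nat \<Rightarrow> nat \<Rightarrow> nat" where
  "covering_number TYPE('a) n k r =
     (LEAST m. \<exists>C :: (nat \<Rightarrow> 'a) set set. is_q_covering n k r C \<and> finite C \<and> card C = m)"

lemma vector_space_vscale: "vector_space (vscale :: 'a::field \<Rightarrow> _)"
  by unfold_locales (auto simp: vscale_def fun_eq_iff algebra_simps)

end

theory Submission
  imports Defs
begin

interpretation V: vector_space "vscale :: 'a::field \<Rightarrow> (nat \<Rightarrow> 'a) \<Rightarrow> _"
  by (rule vector_space_vscale)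

lemma sum_fun_apply: "finite S \<Longrightarrow> (\<Sum>x\<in>S. f x) i = (\<Sum>x\<in>S. f x i)"
  by (induction S rule: finite_induct) (auto simp: plus_fun_def zero_fun_def)

lemma finite_ambient: "finite (ambient n :: (nat \<Rightarrow> 'a::{field,finite}) set)"
proof -
  have "(ambient n :: (nat \<Rightarrow> 'a) set) \<subseteq> (\<lambda>xs i. if i < n then xs ! i else 0) ` {xs. length xs = n}"
  proof
    fix v :: "nat \<Rightarrow> 'a" assume "v \<in> ambient n"
    then have eq: "v = (\<lambda>i. if i < n then map v [0..<n] ! i else 0)"
      by (auto simp: ambient_def fun_eq_iff)
    show "v \<in> (\<lambda>xs i. if i < n then xs ! i else 0) ` {xs. length xs = n}"
      by (rule image_eqI[where x="map v [0..<n]"]) (use eq in simp_all)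
  qed
  then show ?thesis using finite_subset finite_list_length by blast
qed

lemma subspace_ambient: "V.subspace (ambient n :: (nat \<Rightarrow> 'a::field) set)"
  unfolding V.subspace_def ambient_def by (auto simp: vscale_def)

lemma ambient_mono: "n \<le> m \<Longrightarrow> ambient n \<subseteq> ambient m"
  by (auto simp: ambient_def)

definition evec :: "nat \<Rightarrow> nat \<Rightarrow> 'a::field" where
  "evec i = (\<lambda>j. if j = i then 1 else 0)"

lemma evec_ambient: "i < n \<Longrightarrow> evec i \<in> ambient n"
  by (auto simp: evec_def ambient_def)

lemma evec_inj: "inj (evec :: nat \<Rightarrow> nat \<Rightarrow> 'a::field)"
  by (auto simp: inj_def evec_def fun_eq_iff split: if_splits)

lemma evec_indep: "V.independent (evec ` A :: (nat \<Rightarrow> 'a::field) set)"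
  unfolding V.independent_explicit_finite_subsets
proof (intro allI impI ballI)
  fix S :: "(nat \<Rightarrow> 'a) set" and u v
  assume S: "S \<subseteq> evec ` A" "finite S" and s0: "(\<Sum>v\<in>S. vscale (u v) v) = 0" and v: "v \<in> S"
  obtain i where i: "v = evec i" using S v by auto
  have "0 = (\<Sum>w\<in>S. vscale (u w) w) i" using s0 by simp
  also have "\<dots> = (\<Sum>w\<in>S. u w * w i)" by (simp add: sum_fun_apply S vscale_def)
  also have "\<dots> = (\<Sum>w\<in>{v}. u w * w i)"
  proof (rule sum.mono_neutral_right)
    show "\<forall>w\<in>S - {v}. u w * w i = 0"
    proof
      fix w assume w: "w \<in> S - {v}"
      then obtain j where j: "w = evec j" using S by auto
      then have "j \<noteq> i" using w i by auto
      then show "u w * w i = 0" using j by (simp add: evec_def)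
    qed
  qed (use S v in auto)
  also have "\<dots> = u v" using i by (simp add: evec_def)
  finally show "u v = 0" by simp
qed

lemma dim_insert_gen:
  fixes S :: "(nat \<Rightarrow> 'a::field) set"
  assumes x: "x \<notin> V.span S" and fin: "finite (V.span S)"
  shows "V.dim (insert x S) = V.dim S + 1"
proof -
  obtain B where B: "B \<subseteq> V.span S" "V.independent B" "V.span S \<subseteq> V.span B" "card B = V.dim (V.span S)"
    using V.basis_exists [of "V.span S"] by blast
  have "V.dim (V.span (insert x S)) = Suc (V.dim S)"
  proof (rule V.dim_unique)
    show "insert x B \<subseteq> V.span (insert x S)"
      by (meson B(1) insertI1 insert_subset order_trans V.span_base V.span_mono subset_insertI)
    show "V.span (insert x S) \<subseteq> V.span (insert x B)"
      by (metis \<open>B \<subseteq> V.span S\<close> \<open>V.span S \<subseteq> V.span B\<close> V.span_breakdown_eq V.span_subspace subsetI V.subspace_span)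
    show "V.independent (insert x B)"
      by (metis B(1-3) V.independent_insert V.span_subspace V.subspace_span x)
    have "finite B" using B(1) fin finite_subset by blast
    then show "card (insert x B) = Suc (V.dim S)"
    proof -
      have "x \<notin> B" using B(1) x by auto
      then show ?thesis using \<open>finite B\<close> B(4) by simp
    qed
  qed
  then show ?thesis by simp
qed

lemma extend_subspace:
  fixes T :: "(nat \<Rightarrow> 'a::{field,finite}) set"
  assumes "V.subspace T" "T \<subseteq> ambient n" "V.dim T \<le> k" "k \<le> n"
  shows "\<exists>R0. R0 \<in> subspaces_dim n k \<and> T \<subseteq> R0"
  using assms
proof (induction "k - V.dim T" arbitrary: T)
  case 0
  then have "T \<in> subspaces_dim n k" by (simp add: subspaces_dim_def)
  then show ?case by blast
next
  case (Suc d)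
  have spT: "V.span T = T" using Suc.prems(1) by simp
  have finT: "finite T" using Suc.prems(2) finite_ambient finite_subset by blast
  have "\<exists>i<n. evec i \<notin> T"
  proof (rule ccontr)
    assume "\<not> (\<exists>i<n. evec i \<notin> T)"
    then have sub: "evec ` {..<n} \<subseteq> T" by auto
    obtain B where B: "B \<subseteq> T" "V.independent B" "T \<subseteq> V.span B" "card B = V.dim T"
      using V.basis_exists[of T] by blast
    have "finite B" using B(1) finT finite_subset by blast
    then have "card (evec ` {..<n} :: (nat \<Rightarrow> 'a) set) \<le> card B"
      using V.independent_span_bound[OF _ evec_indep, of B "{..<n}"] sub B(3) by blast
    moreover have "card (evec ` {..<n} :: (nat \<Rightarrow> 'a) set) = n"
      by (metis card_image card_lessThan evec_inj inj_on_subset subset_UNIV)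
    ultimately show False using B(4) Suc.hyps(2) Suc.prems by linarith
  qed
  then obtain i where i: "i < n" "evec i \<notin> T" by blast
  define T' where "T' = V.span (insert (evec i) T)"
  have sT': "V.subspace T'" unfolding T'_def by simp
  have aT': "T' \<subseteq> ambient n" unfolding T'_def
    using V.span_minimal[OF _ subspace_ambient] evec_ambient[OF i(1)] Suc.prems(2) by blast
  have dT': "V.dim T' = V.dim T + 1" unfolding T'_def V.dim_span
    using dim_insert_gen[of "evec i" T] i(2) spT finT by simp
  have "d = k - V.dim T'" using Suc.hyps(2) dT' by simp
  from Suc.hyps(1)[OF this sT' aT'] dT' Suc.hyps(2) Suc.prems(4)
  obtain R0 where "R0 \<in> subspaces_dim n k" "T' \<subseteq> R0" by fastforce
  moreover have "T \<subseteq> T'" unfolding T'_def using V.span_superset by blast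
  ultimately show ?case by blast
qed

lemma proj_span:
  fixes v :: "nat \<Rightarrow> 'a::field"
  assumes "v \<in> V.span B"
  shows "v(n:=0) \<in> V.span ((\<lambda>v. v(n:=0)) ` B)"
  using assms
proof (induction rule: V.span_induct_alt)
  case base
  have "(0::nat \<Rightarrow> 'a)(n:=0) = 0" by (simp add: zero_fun_def fun_eq_iff)
  then show ?case using V.span_zero by metis
next
  case (step c x y)
  have eq: "(vscale c x + y)(n:=0) = vscale c (x(n:=0)) + y(n:=0)"
    by (simp add: fun_eq_iff vscale_def)
  have "x(n:=0) \<in> V.span ((\<lambda>v. v(n:=0)) ` B)"
    by (rule V.span_base, rule imageI, rule step(1))
  then show ?case unfolding eq
    by (intro V.span_add V.span_scale step(2))
qed

lemma ext_inter:
  fixes S :: "(nat \<Rightarrow> 'a::field) set"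
  assumes "V.subspace S" "S \<subseteq> ambient n"
  shows "V.span (insert (evec n) S) \<inter> ambient n = S"
proof
  show "S \<subseteq> V.span (insert (evec n) S) \<inter> ambient n"
    using assms V.span_superset by blast
next
  show "V.span (insert (evec n) S) \<inter> ambient n \<subseteq> S"
  proof
    fix y assume y: "y \<in> V.span (insert (evec n) S) \<inter> ambient n"
    have spS: "V.span S = S" using assms(1) by simp
    obtain k where k: "y - vscale k (evec n) \<in> S"
      using V.span_breakdown_eq[of y "evec n" S] y unfolding spS by blast
    then have "(y - vscale k (evec n)) n = 0" using assms(2) by (auto simp: ambient_def)
    moreover have "y n = 0" using y by (auto simp: ambient_def)
    ultimately have "k = 0" by (simp add: vscale_def evec_def)
    then have eq: "y - vscale k (evec n) = y" by (simp add: vscale_def fun_eq_iff)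
    show "y \<in> S" using k by (simp only: eq)
  qed
qed

lemma proj_ambient: "w \<in> ambient (Suc n) \<Longrightarrow> w(n:=0) \<in> ambient n"
  unfolding ambient_def by (simp add: Suc_le_eq)

lemma cov_step:
  fixes C :: "(nat \<Rightarrow> 'a::{field,finite}) set set"
  assumes cov: "is_q_covering n (n - \<delta>) r C" and finC: "finite C" and rn: "r \<le> n" and dn: "\<delta> \<le> n"
  shows "\<exists>C' :: (nat \<Rightarrow> 'a) set set. is_q_covering (Suc n) (Suc n - \<delta>) r C' \<and> finite C' \<and> card C' = card C"
proof -
  define ext where "ext S = V.span (insert (evec n) S)" for S :: "(nat \<Rightarrow> 'a) set"
  have C: "S \<subseteq> ambient n" "V.subspace S" "V.dim S = n - \<delta>" if "S \<in> C" for S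
    using cov that by (auto simp: is_q_covering_def subspaces_dim_def)
  have en: "evec n \<notin> ambient n" by (auto simp: ambient_def evec_def)
  have extdim: "ext S \<in> subspaces_dim (Suc n) (Suc n - \<delta>)" if "S \<in> C" for S
  proof -
    have "insert (evec n) S \<subseteq> ambient (Suc n)"
      using evec_ambient[of n "Suc n"] C(1)[OF that] ambient_mono[of n "Suc n"] by auto
    then have "ext S \<subseteq> ambient (Suc n)" unfolding ext_def
      by (rule V.span_minimal[OF _ subspace_ambient])
    moreover have "V.dim (ext S) = Suc n - \<delta>"
    proof -
      have spS: "V.span S = S" using C(2)[OF that] by simp
      have "finite S" using C(1)[OF that] finite_ambient finite_subset by blast
      moreover have "evec n \<notin> S" using en C(1)[OF that] by blast
      ultimately have "V.dim (insert (evec n) S) = V.dim S + 1"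
        using dim_insert_gen[of "evec n" S] unfolding spS by blast
      then show ?thesis unfolding ext_def V.dim_span using C(3)[OF that] dn by simp
    qed
    ultimately show ?thesis unfolding subspaces_dim_def ext_def by simp
  qed
  have inj: "inj_on ext C"
  proof
    fix S1 S2 assume h: "S1 \<in> C" "S2 \<in> C" "ext S1 = ext S2"
    have "S1 = ext S1 \<inter> ambient n" unfolding ext_def using ext_inter[of S1 n] C[OF h(1)] by simp
    also have "\<dots> = ext S2 \<inter> ambient n" using h(3) by simp
    also have "\<dots> = S2" unfolding ext_def using ext_inter[of S2 n] C[OF h(2)] by simp
    finally show "S1 = S2" .
  qed
  have covers: "\<exists>S'\<in>ext ` C. R \<subseteq> S'" if R: "R \<in> subspaces_dim (Suc n) r" for R
  proof -
    define P where "P v = v(n:=0)" for v :: "nat \<Rightarrow> 'a"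
    have Ra: "R \<subseteq> ambient (Suc n)" using R by (simp add: subspaces_dim_def)
    have Rd: "V.dim R = r" using R by (simp add: subspaces_dim_def)
    obtain B where B: "B \<subseteq> R" "V.independent B" "R \<subseteq> V.span B" "card B = V.dim R"
      using V.basis_exists[of R] by blast
    have "B \<subseteq> ambient (Suc n)" using B(1) Ra by blast
    then have finB: "finite B" using finite_ambient by (rule finite_subset)
    define T where "T = V.span (P ` B)"
    have PB: "P ` B \<subseteq> ambient n"
    proof
      fix x assume "x \<in> P ` B"
      then obtain w where w: "w \<in> B" "x = P w" by blast
      then have "w \<in> ambient (Suc n)" using B(1) Ra by blast
      then show "x \<in> ambient n" unfolding w(2) P_def by (rule proj_ambient)
    qed
    have Ta: "T \<subseteq> ambient n" unfolding T_def using V.span_minimal[OF PB subspace_ambient] .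
    have "V.dim T \<le> r"
    proof -
      have "V.dim T = V.dim (P ` B)" unfolding T_def by simp
      also have "\<dots> \<le> card (P ` B)" using V.dim_le_card' finB by blast
      also have "\<dots> \<le> card B" using card_image_le finB by blast
      finally show ?thesis using B(4) Rd by simp
    qed
    then obtain R0 where R0: "R0 \<in> subspaces_dim n r" "T \<subseteq> R0"
      using extend_subspace[of T n r] Ta rn unfolding T_def by blast
    then obtain S where S: "S \<in> C" "R0 \<subseteq> S" using cov by (auto simp: is_q_covering_def)
    have "R \<subseteq> ext S"
    proof
      fix v assume v: "v \<in> R"
      have "P v \<in> T" unfolding T_def P_def using proj_span[of v B n] B(3) v by (auto simp: P_def)
      then have Pv: "P v \<in> S" using R0 S by blast
      have "v - vscale (v n) (evec n) = P v" by (simp add: fun_eq_iff vscale_def evec_def P_def)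
      then show "v \<in> ext S" unfolding ext_def V.span_breakdown_eq
        using Pv V.span_base by metis
    qed
    then show ?thesis using S by blast
  qed
  have "is_q_covering (Suc n) (Suc n - \<delta>) r (ext ` C)"
    unfolding is_q_covering_def using extdim covers by blast
  moreover have "card (ext ` C) = card C" using card_image[OF inj] .
  moreover have "finite (ext ` C)" using finC by simp
  ultimately show ?thesis by blast
qed

lemma exists_cov:
  assumes "r + \<delta> \<le> n"
  shows "\<exists>C :: (nat \<Rightarrow> 'a::{field,finite}) set set. is_q_covering n (n - \<delta>) r C \<and> finite C"
  using assms
proof (induction n rule: dec_induct)
  case base
  have "subspaces_dim (r + \<delta>) r \<subseteq> Pow (ambient (r + \<delta>) :: (nat \<Rightarrow> 'a) set)"
    by (auto simp: subspaces_dim_def)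
  then have "finite (subspaces_dim (r + \<delta>) r :: (nat \<Rightarrow> 'a) set set)"
    using finite_ambient finite_Pow_iff finite_subset by metis
  moreover have "is_q_covering (r + \<delta>) (r + \<delta> - \<delta>) r (subspaces_dim (r + \<delta>) r :: (nat \<Rightarrow> 'a) set set)"
    by (auto simp: is_q_covering_def)
  ultimately show ?case by blast
next
  case (step n)
  then obtain C :: "(nat \<Rightarrow> 'a) set set" where "is_q_covering n (n - \<delta>) r C" "finite C" by blast
  from cov_step[OF this] step.hyps show ?case by fastforce
qed

lemma cov_mono:
  assumes "r + \<delta> \<le> n"
  shows "covering_number TYPE('a::{field,finite}) (Suc n) (Suc n - \<delta>) r
         \<le> covering_number TYPE('a) n (n - \<delta>) r"
proof -
  let ?P = "\<lambda>n k m. \<exists>C :: (nat \<Rightarrow> 'a) set set. is_q_covering n k r C \<and> finite C \<and> card C = m"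
  obtain C0 :: "(nat \<Rightarrow> 'a) set set" where "is_q_covering n (n - \<delta>) r C0" "finite C0"
    using exists_cov[OF assms] by blast
  then have ex: "?P n (n - \<delta>) (card C0)" by blast
  have "?P n (n - \<delta>) (covering_number TYPE('a) n (n - \<delta>) r)"
    unfolding covering_number_def by (rule LeastI[of "?P n (n - \<delta>)", OF ex])
  then obtain C :: "(nat \<Rightarrow> 'a) set set" where C: "is_q_covering n (n - \<delta>) r C" "finite C"
    "card C = covering_number TYPE('a) n (n - \<delta>) r" by blast
  obtain C' :: "(nat \<Rightarrow> 'a) set set" where C': "is_q_covering (Suc n) (Suc n - \<delta>) r C'" "finite C'" "card C' = card C"
    using cov_step[OF C(1) C(2)] assms by fastforce
  have "?P (Suc n) (Suc n - \<delta>) (covering_number TYPE('a) n (n - \<delta>) r)"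
    by (intro exI[of _ C']) (simp add: C' C(3))
  from Least_le[of "?P (Suc n) (Suc n - \<delta>)", OF this] show ?thesis unfolding covering_number_def .
qed

theorem mainTheorem1:
  fixes r \<delta> :: nat
  assumes "r > 0" and "\<delta> > 0"
  shows "\<exists>c n0. \<forall>n > n0. covering_number TYPE('a::{field,finite}) n (n - \<delta>) r = c"
proof -
  define f where "f n = covering_number TYPE('a) n (n - \<delta>) r" for n
  define N where "N = r + \<delta>"
  have mono: "f (Suc n) \<le> f n" if "N \<le> n" for n
    using cov_mono[of r \<delta> n] that unfolding f_def N_def by blast
  have dec: "f n \<le> f m" if "N \<le> m" "m \<le> n" for m n
    using that(2,1)
  proof (induction n rule: dec_induct)
    case base then show ?case by simp
  next
    case (step k) then show ?case using mono[of k] by simp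
  qed
  obtain m where m: "N \<le> m" "\<forall>k. N \<le> k \<longrightarrow> f m \<le> f k"
  proof -
    define v where "v = (LEAST v. \<exists>k. N \<le> k \<and> f k = v)"
    have "\<exists>k. N \<le> k \<and> f k = v" unfolding v_def by (rule LeastI[of _ "f N"]) auto
    then obtain k where k: "N \<le> k" "f k = v" by blast
    have "\<forall>j. N \<le> j \<longrightarrow> f k \<le> f j"
      using k(2) unfolding v_def by (auto intro: Least_le)
    then show ?thesis using that k(1) by blast
  qed
  have "\<forall>n > m. f n = f m"
    using dec[of m] m by (auto intro: antisym)
  then show ?thesis unfolding f_def by blast
qed

end
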